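(* Let $\mathbb B^2=\{z\in\mathbb C^2:|z|<1\}$ and let $F:\mathbb B^2\to \mathbb B^2$ be holomorphic. Suppose there exist two complex geodesics $\varphi, \eta:\mathbb D \to \mathbb B^2$ such that $\varphi(\mathbb D)\cap \eta(\mathbb D)=\{z\}$ for some $z\in \mathbb B^2$ and $F$ is an isometry for the Kobayashi metric on $\varphi$ and on $\eta$ (i.e. $F\circ\varphi$ and $F\circ\eta$ are complex geodesics of $\mathbb B^2$). Then $F$ is an automorphism of $\mathbb B^2$.
   Context: $\mathbb D=\{\zeta\in\mathbb C:|\zeta|<1\}$. A complex geodesic of $\mathbb B^2$ is a holomorphic map $\varphi:\mathbb D\to\mathbb B^2$ which is an isometry between the hyperbolic distance of $\mathbb D$ and the Kobayashi distance of $\mathbb B^2$. *)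

theory Defs
  imports "HOL-Analysis.Analysis"
begin

text \<open>The unit disc and the unit ball of C^2 (Euclidean norm on complex * complex).\<close>
definition unit_disc :: "complex set" where
  "unit_disc = ball 0 1"

definition B2 :: "(complex \<times> complex) set" where
  "B2 = ball 0 1"

definition cscale2 :: "complex \<Rightarrow> complex \<times> complex \<Rightarrow> complex \<times> complex" where
  "cscale2 c v = (c * fst v, c * snd v)"

definition holo2 :: "(complex \<times> complex \<Rightarrow> complex \<times> complex) \<Rightarrow> (complex \<times> complex) set \<Rightarrow> bool" where
  "holo2 F U \<longleftrightarrow> (\<forall>z\<in>U. \<exists>D. (F has_derivative D) (at z) \<and> (\<forall>c v. D (cscale2 c v) = cscale2 c (D v)))"

definition holo_disc :: "(complex \<Rightarrow> complex \<times> complex) \<Rightarrow> bool" where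
  "holo_disc \<phi> \<longleftrightarrow> (\<lambda>t. fst (\<phi> t)) holomorphic_on unit_disc \<and> (\<lambda>t. snd (\<phi> t)) holomorphic_on unit_disc"

definition hyp_dist :: "complex \<Rightarrow> complex \<Rightarrow> real" where
  "hyp_dist a b = artanh (cmod (a - b) / cmod (1 - cnj a * b))"

definition kobayashi_dist :: "(complex \<times> complex) set \<Rightarrow> complex \<times> complex \<Rightarrow> complex \<times> complex \<Rightarrow> real" where
  "kobayashi_dist \<Omega> z w = Inf {(\<Sum>j<m. hyp_dist (a j) (b j)) | m p a b f.
      p 0 = z \<and> p m = w \<and>
      (\<forall>j<m. holo_disc (f j) \<and> f j ` unit_disc \<subseteq> \<Omega> \<and> a j \<in> unit_disc \<and> b j \<in> unit_disc \<and>
              f j (a j) = p j \<and> f j (b j) = p (Suc j))}"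

definition complex_geodesic :: "(complex \<Rightarrow> complex \<times> complex) \<Rightarrow> bool" where
  "complex_geodesic \<phi> \<longleftrightarrow> holo_disc \<phi> \<and> \<phi> ` unit_disc \<subseteq> B2 \<and>
     (\<forall>a\<in>unit_disc. \<forall>b\<in>unit_disc. kobayashi_dist B2 (\<phi> a) (\<phi> b) = hyp_dist a b)"

definition automorphism_B2 :: "(complex \<times> complex \<Rightarrow> complex \<times> complex) \<Rightarrow> bool" where
  "automorphism_B2 F \<longleftrightarrow> holo2 F B2 \<and> bij_betw F B2 B2 \<and> holo2 (inv_into B2 F) B2"

end

theory Submission
  imports Defs "HOL-Complex_Analysis.Complex_Analysis"
begin

definition ip :: "complex \<times> complex \<Rightarrow> complex \<times> complex \<Rightarrow> complex" where
  "ip x y = fst x * cnj (fst y) + snd x * cnj (snd y)"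

lemma norm_sq_pair: "(norm (x::complex\<times>complex))^2 = (cmod (fst x))^2 + (cmod (snd x))^2"
  by (cases x) (simp add: norm_Pair)

lemma normsq_ip: "complex_of_real ((norm x)^2) = ip x x"
  unfolding norm_sq_pair of_real_add complex_norm_square ip_def ..

lemma ip_cs: "cmod (ip x y) \<le> norm x * norm y"
proof -
  have "cmod (ip x y) \<le> cmod (fst x) * cmod (fst y) + cmod (snd x) * cmod (snd y)"
    unfolding ip_def by (metis complex_mod_cnj norm_mult norm_triangle_ineq)
  also have "\<dots> \<le> norm x * norm y"
  proof -
    define a where "a = cmod (fst x)" define b where "b = cmod (snd x)"
    define c where "c = cmod (fst y)" define d where "d = cmod (snd y)"
    have nx: "norm x = sqrt (a^2+b^2)" using norm_sq_pair[of x] a_def b_def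
      by (metis norm_ge_zero real_sqrt_abs real_sqrt_pow2_iff abs_of_nonneg)
    have ny: "norm y = sqrt (c^2+d^2)" using norm_sq_pair[of y] c_def d_def
      by (metis norm_ge_zero real_sqrt_abs abs_of_nonneg)
    have "(a*c+b*d)^2 \<le> (a^2+b^2)*(c^2+d^2)"
    proof -
      have "0 \<le> (a*d-b*c)^2" by simp
      thus ?thesis by (simp add: power2_eq_square algebra_simps)
    qed
    hence "a*c+b*d \<le> sqrt ((a^2+b^2)*(c^2+d^2))"
      using real_le_rsqrt by blast
    thus ?thesis unfolding nx ny a_def b_def c_def d_def by (simp add: real_sqrt_mult)
  qed
  finally show ?thesis .
qed

definition hol2s :: "(complex \<times> complex \<Rightarrow> complex) \<Rightarrow> (complex \<times> complex) set \<Rightarrow> bool" where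
  "hol2s f U \<longleftrightarrow> (\<forall>z\<in>U. \<exists>D. (f has_derivative D) (at z) \<and> (\<forall>c v. D (cscale2 c v) = c * D v))"

lemma hol2s_fst: "hol2s fst U"
  unfolding hol2s_def
  by (auto intro!: exI[of _ fst] bounded_linear_imp_has_derivative bounded_linear_fst simp: cscale2_def)

lemma hol2s_snd: "hol2s snd U"
  unfolding hol2s_def
  by (auto intro!: exI[of _ snd] bounded_linear_imp_has_derivative bounded_linear_snd simp: cscale2_def)

lemma hol2s_const: "hol2s (\<lambda>x. c) U"
  unfolding hol2s_def by (auto intro!: exI[of _ "\<lambda>_. 0"] derivative_eq_intros)

lemma hol2s_add: assumes "hol2s f U" "hol2s g U"  shows "hol2s (\<lambda>x. f x + g x) U"
  unfolding hol2s_def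
proof
  fix z assume z: "z \<in> U"
  obtain D1 where D1: "(f has_derivative D1) (at z)" "\<forall>c v. D1 (cscale2 c v) = c * D1 v"
    using assms(1) z unfolding hol2s_def by blast
  obtain D2 where D2: "(g has_derivative D2) (at z)" "\<forall>c v. D2 (cscale2 c v) = c * D2 v"
    using assms(2) z unfolding hol2s_def by blast
  show "\<exists>D. ((\<lambda>x. f x + g x) has_derivative D) (at z) \<and> (\<forall>c v. D (cscale2 c v) = c * D v)"
    by (rule exI[of _ "\<lambda>h. D1 h + D2 h"]) (use D1 D2 in \<open>auto intro!: derivative_eq_intros simp: algebra_simps\<close>)
qed
lemma hol2s_diff: assumes "hol2s f U" "hol2s g U"  shows "hol2s (\<lambda>x. f x - g x) U"
  unfolding hol2s_def
proof
  fix z assume z: "z \<in> U"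
  obtain D1 where D1: "(f has_derivative D1) (at z)" "\<forall>c v. D1 (cscale2 c v) = c * D1 v"
    using assms(1) z unfolding hol2s_def by blast
  obtain D2 where D2: "(g has_derivative D2) (at z)" "\<forall>c v. D2 (cscale2 c v) = c * D2 v"
    using assms(2) z unfolding hol2s_def by blast
  show "\<exists>D. ((\<lambda>x. f x - g x) has_derivative D) (at z) \<and> (\<forall>c v. D (cscale2 c v) = c * D v)"
    by (rule exI[of _ "\<lambda>h. D1 h - D2 h"]) (use D1 D2 in \<open>auto intro!: derivative_eq_intros simp: algebra_simps\<close>)
qed
lemma hol2s_mult: assumes "hol2s f U" "hol2s g U"  shows "hol2s (\<lambda>x. f x * g x) U"
  unfolding hol2s_def
proof
  fix z assume z: "z \<in> U"
  obtain D1 where D1: "(f has_derivative D1) (at z)" "\<forall>c v. D1 (cscale2 c v) = c * D1 v"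
    using assms(1) z unfolding hol2s_def by blast
  obtain D2 where D2: "(g has_derivative D2) (at z)" "\<forall>c v. D2 (cscale2 c v) = c * D2 v"
    using assms(2) z unfolding hol2s_def by blast
  show "\<exists>D. ((\<lambda>x. f x * g x) has_derivative D) (at z) \<and> (\<forall>c v. D (cscale2 c v) = c * D v)"
    by (rule exI[of _ "\<lambda>h. f z * D2 h + D1 h * g z"]) (use D1 D2 in \<open>auto intro!: derivative_eq_intros simp: algebra_simps\<close>)
qed
lemma hol2s_divide: assumes "hol2s f U" "hol2s g U" "\<forall>x\<in>U. g x \<noteq> 0" shows "hol2s (\<lambda>x. f x / g x) U"
  unfolding hol2s_def
proof
  fix z assume z: "z \<in> U"
  obtain D1 where D1: "(f has_derivative D1) (at z)" "\<forall>c v. D1 (cscale2 c v) = c * D1 v"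
    using assms(1) z unfolding hol2s_def by blast
  obtain D2 where D2: "(g has_derivative D2) (at z)" "\<forall>c v. D2 (cscale2 c v) = c * D2 v"
    using assms(2) z unfolding hol2s_def by blast
  show "\<exists>D. ((\<lambda>x. f x / g x) has_derivative D) (at z) \<and> (\<forall>c v. D (cscale2 c v) = c * D v)"
  proof (rule exI[of _ "\<lambda>h. - f z * (inverse (g z) * D2 h * inverse (g z)) + D1 h / g z"], intro conjI allI)
    show "((\<lambda>x. f x / g x) has_derivative (\<lambda>h. - f z * (inverse (g z) * D2 h * inverse (g z)) + D1 h / g z)) (at z)"
      by (rule has_derivative_divide[OF D1(1) D2(1)]) (use z assms(3) in auto)
    fix c v show "- f z * (inverse (g z) * D2 (cscale2 c v) * inverse (g z)) + D1 (cscale2 c v) / g z = c * (- f z * (inverse (g z) * D2 v * inverse (g z)) + D1 v / g z)"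
      using D1(2) D2(2) by (simp only:) (simp add: field_simps)
  qed
qed
lemma holo2_pair: assumes "hol2s f U" "hol2s g U" shows "holo2 (\<lambda>x. (f x, g x)) U"
  unfolding holo2_def
proof
  fix z assume z: "z \<in> U"
  obtain D1 where D1: "(f has_derivative D1) (at z)" "\<forall>c v. D1 (cscale2 c v) = c * D1 v"
    using assms(1) z unfolding hol2s_def by blast
  obtain D2 where D2: "(g has_derivative D2) (at z)" "\<forall>c v. D2 (cscale2 c v) = c * D2 v"
    using assms(2) z unfolding hol2s_def by blast
  show "\<exists>D. ((\<lambda>x. (f x, g x)) has_derivative D) (at z) \<and> (\<forall>c v. D (cscale2 c v) = cscale2 c (D v))"
    by (rule exI[of _ "\<lambda>h. (D1 h, D2 h)"]) (use D1 D2 in \<open>auto intro!: has_derivative_Pair simp: cscale2_def\<close>)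
qed

lemma holo2_comp: assumes "holo2 f U" "holo2 g V" "f ` U \<subseteq> V" shows "holo2 (g \<circ> f) U"
  unfolding holo2_def
proof
  fix z assume z: "z \<in> U"
  obtain D1 where D1: "(f has_derivative D1) (at z)" "\<forall>c v. D1 (cscale2 c v) = cscale2 c (D1 v)"
    using assms(1) z unfolding holo2_def by blast
  obtain D2 where D2: "(g has_derivative D2) (at (f z))" "\<forall>c v. D2 (cscale2 c v) = cscale2 c (D2 v)"
    using assms(2,3) z unfolding holo2_def by blast
  show "\<exists>D. ((g \<circ> f) has_derivative D) (at z) \<and> (\<forall>c v. D (cscale2 c v) = cscale2 c (D v))"
  proof (rule exI[of _ "D2 \<circ> D1"], intro conjI allI)
    show "((g \<circ> f) has_derivative D2 \<circ> D1) (at z)" by (rule diff_chain_at[OF D1(1) D2(1)])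
    fix c v show "(D2 \<circ> D1) (cscale2 c v) = cscale2 c ((D2 \<circ> D1) v)"
      using D1(2) D2(2) by (simp only: comp_apply)
  qed
qed

lemma holo2_cong: assumes "holo2 f U" "open U" "\<And>x. x \<in> U \<Longrightarrow> g x = f x" shows "holo2 g U"
  unfolding holo2_def
proof
  fix z assume z: "z \<in> U"
  obtain D1 where D1: "(f has_derivative D1) (at z)" "\<forall>c v. D1 (cscale2 c v) = cscale2 c (D1 v)"
    using assms(1) z unfolding holo2_def by blast
  have "(g has_derivative D1) (at z)"
    by (rule has_derivative_transform_within_open[OF D1(1) assms(2) z]) (simp add: assms(3))
  thus "\<exists>D. (g has_derivative D) (at z) \<and> (\<forall>c v. D (cscale2 c v) = cscale2 c (D v))"
    using D1(2) by blast
qed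

lemma holo2_id: "holo2 (\<lambda>x. x) U"
  unfolding holo2_def by (auto intro!: exI[of _ "\<lambda>x. x"] derivative_eq_intros)

lemma holo2_lin: "holo2 (\<lambda>x. (a * fst x + b * snd x, c * fst x + d * snd x)) U"
  by (intro holo2_pair hol2s_add hol2s_mult hol2s_const hol2s_fst hol2s_snd)

lemma curve_deriv:
  assumes "(f1 has_field_derivative d1) (at t)" "(f2 has_field_derivative d2) (at t)"
  shows "((\<lambda>t. (f1 t, f2 t)) has_derivative (\<lambda>h. cscale2 h (d1, d2))) (at t)"
proof -
  have "((\<lambda>t. (f1 t, f2 t)) has_derivative (\<lambda>h. ((*) d1 h, (*) d2 h))) (at t)"
    using assms unfolding has_field_derivative_def by (rule has_derivative_Pair)
  thus ?thesis by (simp add: cscale2_def mult.commute)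
qed

lemma ip_has_derivative: "((\<lambda>y. ip y e) has_derivative (\<lambda>h. ip h e)) (at x)"
  unfolding ip_def by (auto intro!: derivative_eq_intros)

lemma comp_deriv:
  assumes "(\<gamma> has_derivative (\<lambda>h. cscale2 h g')) (at t)" "(G has_derivative D) (at (\<gamma> t))"
    "\<forall>c v. D (cscale2 c v) = cscale2 c (D v)"
  shows "((\<lambda>t. ip (G (\<gamma> t)) e) has_field_derivative ip (D g') e) (at t)"
proof -
  have "((\<lambda>y. ip y e) \<circ> (G \<circ> \<gamma>) has_derivative (\<lambda>h. ip h e) \<circ> (D \<circ> (\<lambda>h. cscale2 h g'))) (at t)"
    by (intro diff_chain_at assms ip_has_derivative)
  moreover have "(\<lambda>h. ip h e) \<circ> (D \<circ> (\<lambda>h. cscale2 h g')) = (*) (ip (D g') e)"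
    using assms(3) by (auto simp: ip_def cscale2_def algebra_simps)
  ultimately show ?thesis unfolding has_field_derivative_def by (simp add: o_def)
qed

lemma open_unit_disc: "open unit_disc" by (simp add: unit_disc_def)
lemma open_B2: "open B2" by (simp add: B2_def)

lemma holo_disc_deriv:
  assumes "holo_disc \<gamma>" "t \<in> unit_disc"
  shows "\<exists>g'. (\<gamma> has_derivative (\<lambda>h. cscale2 h g')) (at t)"
proof -
  from assms obtain d1 d2 where "((\<lambda>t. fst (\<gamma> t)) has_field_derivative d1) (at t)"
    "((\<lambda>t. snd (\<gamma> t)) has_field_derivative d2) (at t)"
    unfolding holo_disc_def using holomorphic_on_open[OF open_unit_disc] by blast
  from curve_deriv[OF this] show ?thesis by auto
qed

lemma holo_disc_ip_comp:
  assumes "holo_disc \<gamma>" "\<gamma> ` unit_disc \<subseteq> U" "holo2 G U"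
  shows "(\<lambda>t. ip (G (\<gamma> t)) e) holomorphic_on unit_disc"
  unfolding holomorphic_on_open[OF open_unit_disc]
proof
  fix t assume t: "t \<in> unit_disc"
  obtain g' where g': "(\<gamma> has_derivative (\<lambda>h. cscale2 h g')) (at t)"
    using holo_disc_deriv[OF assms(1) t] by blast
  obtain D where "(G has_derivative D) (at (\<gamma> t))" "\<forall>c v. D (cscale2 c v) = cscale2 c (D v)"
    using assms(2,3) t unfolding holo2_def by blast
  from comp_deriv[OF g' this] show "\<exists>f'. ((\<lambda>t. ip (G (\<gamma> t)) e) has_field_derivative f') (at t)" by blast
qed

lemma fst_ip: "fst x = ip x (1,0)" and snd_ip: "snd x = ip x (0,1)"
  by (simp_all add: ip_def)

lemma holo_disc_comp:
  assumes "holo_disc \<gamma>" "\<gamma> ` unit_disc \<subseteq> U" "holo2 G U"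
  shows "holo_disc (G \<circ> \<gamma>)"
  unfolding holo_disc_def o_def fst_ip[of "G _"] snd_ip[of "G _"]
  using holo_disc_ip_comp[OF assms] by blast

lemma holo_disc_ip:
  assumes "holo_disc \<gamma>"
  shows "(\<lambda>t. ip (\<gamma> t) e) holomorphic_on unit_disc"
  using holo_disc_ip_comp[OF assms _ holo2_id, of UNIV] by simp

lemma artanh_mono_strict:
  fixes x y :: real assumes "0 \<le> x" "x < y" "y < 1" shows "artanh x < artanh y"
proof -
  have "(1+x)/(1-x) < (1+y)/(1-y)" using assms by (simp add: field_simps) 
  moreover have "0 < (1+x)/(1-x)" using assms by simp
  ultimately have "ln ((1+x)/(1-x)) < ln ((1+y)/(1-y))" by simp
  thus ?thesis by (simp add: artanh_def)
qed

lemma artanh_le_imp: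
  fixes x y :: real assumes "0 \<le> x" "x < 1" "0 \<le> y" "y < 1" "artanh x \<le> artanh y" shows "x \<le> y"
  using artanh_mono_strict[of y x] assms by force

lemma artanh_nonneg: fixes x :: real assumes "0 \<le> x" "x < 1" shows "0 \<le> artanh x"
  using artanh_mono_strict[of 0 x] assms by (cases "x = 0") auto

lemma disc_identity:
  "(cmod (1 - cnj s * b))^2 - (cmod (b - s))^2 = (1 - (cmod s)^2) * (1 - (cmod b)^2)"
  unfolding cmod_power2 by (simp add: algebra_simps power2_eq_square)

lemma disc_rho_lt:
  assumes "cmod s < 1" "cmod b < 1"
  shows "1 - cnj s * b \<noteq> 0" "cmod (b - s) < cmod (1 - cnj s * b)"
proof -
  have "0 < (1 - (cmod s)^2) * (1 - (cmod b)^2)"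
    using assms by (simp add: abs_square_less_1)
  hence lt: "(cmod (b - s))^2 < (cmod (1 - cnj s * b))^2" using disc_identity[of s b] by linarith
  thus "cmod (b - s) < cmod (1 - cnj s * b)" using power2_less_imp_less by fastforce
  thus "1 - cnj s * b \<noteq> 0" by (metis norm_eq_zero norm_ge_zero not_less)
qed

definition mob :: "complex \<Rightarrow> complex \<Rightarrow> complex" where
  "mob s b = (b - s) / (1 - cnj s * b)"

lemma mob_in_disc: assumes "cmod s < 1" "cmod b < 1" shows "cmod (mob s b) < 1"
  using disc_rho_lt[OF assms] by (simp add: mob_def norm_divide divide_less_eq)

lemma mob_inv: assumes "cmod s < 1" "cmod b < 1" shows "mob s (mob (-s) b) = b"
proof -
  have nz: "1 + cnj s * b \<noteq> 0" using disc_rho_lt(1)[of "-s" b] assms by simp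
  have nz2: "1 - cnj s * s \<noteq> 0"
  proof
    assume "1 - cnj s * s = 0"
    hence "complex_of_real ((cmod s)^2) = 1" by (metis complex_norm_square mult.commute right_minus_eq)
    hence "(cmod s)^2 = 1" using of_real_eq_1_iff by blast
    moreover have "(cmod s)^2 < 1" using assms(1) by (simp add: abs_square_less_1)
    ultimately show False by linarith
  qed
  have 1: "mob (-s) b - s = b*(1 - cnj s * s)/(1 + cnj s * b)" using nz by (simp add: mob_def field_simps)
  have 2: "1 - cnj s * mob (-s) b = (1 - cnj s * s)/(1 + cnj s * b)" using nz by (simp add: mob_def field_simps)
  show ?thesis unfolding mob_def[of s] 1 2 using nz nz2 by simp
qed

lemma mob_holo: assumes "cmod s < 1" shows "mob s holomorphic_on unit_disc"
  unfolding mob_def[abs_def] unit_disc_def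
  using disc_rho_lt(1)[OF assms] by (auto intro!: holomorphic_intros)

lemma mob_0: "mob (-s) 0 = s" by (simp add: mob_def)

lemma mob_rho: "cmod (s - b) / cmod (1 - cnj s * b) = cmod (mob s b)"
  by (simp add: mob_def norm_divide norm_minus_commute)

lemma hyp_dist_nonneg: assumes "a \<in> unit_disc" "b \<in> unit_disc" shows "0 \<le> hyp_dist a b"
proof -
  have "cmod (b - a) < cmod (1 - cnj a * b)" using disc_rho_lt(2)[of a b] assms by (simp add: unit_disc_def)
  hence "cmod (a - b) / cmod (1 - cnj a * b) < 1"
    by (metis divide_less_eq_1_pos norm_ge_zero norm_minus_commute le_less_trans)
  thus ?thesis unfolding hyp_dist_def by (intro artanh_nonneg) auto
qed

lemma kob_le:
  assumes "holo_disc f" "f ` unit_disc \<subseteq> B2" "a \<in> unit_disc" "b \<in> unit_disc"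
  shows "kobayashi_dist B2 (f a) (f b) \<le> hyp_dist a b"
  unfolding kobayashi_dist_def
proof (rule cInf_lower)
  let ?p = "\<lambda>j::nat. if j = 0 then f a else f b"
  have e: "hyp_dist a b = (\<Sum>j<(1::nat). hyp_dist ((\<lambda>_. a) j) ((\<lambda>_. b) j))" by simp
  have P: "?p 0 = f a \<and> ?p 1 = f b \<and>
      (\<forall>j<1. holo_disc ((\<lambda>_. f) j) \<and> (\<lambda>_. f) j ` unit_disc \<subseteq> B2 \<and> (\<lambda>_. a) j \<in> unit_disc \<and> (\<lambda>_. b) j \<in> unit_disc \<and>
              (\<lambda>_. f) j ((\<lambda>_. a) j) = ?p j \<and> (\<lambda>_. f) j ((\<lambda>_. b) j) = ?p (Suc j))"
    using assms by auto
  show "hyp_dist a b \<in> {(\<Sum>j<m. hyp_dist (aa j) (bb j)) | m p aa bb ff.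
      p 0 = f a \<and> p m = f b \<and>
      (\<forall>j<m. holo_disc (ff j) \<and> ff j ` unit_disc \<subseteq> B2 \<and> aa j \<in> unit_disc \<and> bb j \<in> unit_disc \<and>
              ff j (aa j) = p j \<and> ff j (bb j) = p (Suc j))}"
    apply (rule CollectI)
    apply (rule exI[where x=1], rule exI[where x="?p"], rule exI[where x="\<lambda>_. a"],
           rule exI[where x="\<lambda>_. b"], rule exI[where x="\<lambda>_. f"])
    apply (rule conjI[OF e])
    using P by simp
  show "bdd_below {(\<Sum>j<m. hyp_dist (aa j) (bb j)) | m p aa bb ff.
      p 0 = f a \<and> p m = f b \<and>
      (\<forall>j<m. holo_disc (ff j) \<and> ff j ` unit_disc \<subseteq> B2 \<and> aa j \<in> unit_disc \<and> bb j \<in> unit_disc \<and>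
              ff j (aa j) = p j \<and> ff j (bb j) = p (Suc j))}"
  proof (rule bdd_belowI[of _ 0])
    fix x assume "x \<in> {(\<Sum>j<m. hyp_dist (aa j) (bb j)) | m p aa bb ff.
      p 0 = f a \<and> p m = f b \<and>
      (\<forall>j<m. holo_disc (ff j) \<and> ff j ` unit_disc \<subseteq> B2 \<and> aa j \<in> unit_disc \<and> bb j \<in> unit_disc \<and>
              ff j (aa j) = p j \<and> ff j (bb j) = p (Suc j))}"
    then show "0 \<le> x"
      unfolding mem_Collect_eq
      apply (elim exE conjE)
      apply (simp only:)
      apply (rule sum_nonneg)
      using hyp_dist_nonneg by blast
  qed
qed

lemma norm_cscale2: "norm (cscale2 c v) = cmod c * norm v"
  by (cases v) (simp add: cscale2_def norm_Pair norm_mult power_mult_distrib real_sqrt_mult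
      flip: distrib_left)

lemma ip_cscale2_right: "ip x (cscale2 c y) = cnj c * ip x y"
  by (simp add: ip_def cscale2_def algebra_simps)
lemma ip_cscale2_left: "ip (cscale2 c x) y = c * ip x y"
  by (simp add: ip_def cscale2_def algebra_simps)
lemma ip_zero_left[simp]: "ip 0 y = 0" by (simp add: ip_def)

lemma cscale2_assoc: "cscale2 a (cscale2 b v) = cscale2 (a * b) v"
  by (simp add: cscale2_def algebra_simps)

lemma pyth:
  assumes "norm e = 1"
  shows "(norm (x - cscale2 (ip x e) e))^2 = (norm x)^2 - (cmod (ip x e))^2"
proof -
  have ee: "ip e e = 1" using normsq_ip[of e] assms by simp
  define c where "c = ip x e"
  have ex: "ip e x = cnj c" by (simp add: c_def ip_def)
  have "ip (x - cscale2 c e) (x - cscale2 c e) = ip x x - cnj c * ip x e - c * ip e x + c * cnj c * ip e e"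
    by (simp add: ip_def cscale2_def algebra_simps)
  also have "\<dots> = ip x x - c * cnj c" using ee ex by (simp add: c_def)
  finally have "complex_of_real ((norm (x - cscale2 c e))^2) = complex_of_real ((norm x)^2 - (cmod c)^2)"
    unfolding of_real_diff normsq_ip complex_norm_square .
  thus ?thesis using c_def of_real_eq_iff by blast
qed

lemma B2_norm: "x \<in> B2 \<longleftrightarrow> norm x < 1" by (simp add: B2_def)
lemma disc_norm: "t \<in> unit_disc \<longleftrightarrow> cmod t < 1" by (simp add: unit_disc_def)

lemma ip_self: "ip x x = complex_of_real ((norm x)^2)" by (rule normsq_ip[symmetric])

lemma schwarz_vec:
  assumes "holo_disc ch" "ch ` unit_disc \<subseteq> B2" "ch 0 = 0" "\<zeta> \<in> unit_disc"
  shows "norm (ch \<zeta>) \<le> cmod \<zeta>"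
proof (cases "ch \<zeta> = 0")
  case True thus ?thesis by simp
next
  case False
  define n where "n = norm (ch \<zeta>)"
  have n0: "n > 0" using False by (simp add: n_def)
  define e where "e = cscale2 (1 / complex_of_real n) (ch \<zeta>)"
  have ne: "norm e = 1" using n0 by (simp add: e_def norm_cscale2 norm_divide n_def)
  define g where "g t = ip (ch t) e" for t
  have hol: "g holomorphic_on ball 0 1"
    using holo_disc_ip[OF assms(1)] unfolding g_def unit_disc_def by simp
  have g0: "g 0 = 0" by (simp add: g_def assms(3))
  have lt: "norm (g t) < 1" if "norm t < 1" for t
  proof -
    have "ch t \<in> B2" using assms(2) that disc_norm by blast
    hence "norm (ch t) < 1" by (simp add: B2_norm)
    thus ?thesis using ip_cs[of "ch t" e] ne unfolding g_def by simp
  qed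
  have "norm (g \<zeta>) \<le> norm \<zeta>"
    by (rule Schwarz_Lemma(1)[OF hol g0 lt]) (use assms(4) in \<open>auto simp: disc_norm\<close>)
  moreover have "g \<zeta> = complex_of_real n"
    unfolding g_def e_def ip_cscale2_right ip_self using n0 by (simp add: n_def power2_eq_square)
  ultimately show ?thesis using n0 by (simp add: n_def)
qed

lemma lin_disc:
  assumes "holo_disc ch" "ch ` unit_disc \<subseteq> B2" "ch 0 = 0" "\<forall>\<zeta>\<in>unit_disc. norm (ch \<zeta>) = cmod \<zeta>"
  shows "\<exists>v. norm v = 1 \<and> (\<forall>\<zeta>\<in>unit_disc. ch \<zeta> = cscale2 \<zeta> v)"
proof -
  define x0 where "x0 = ch (1/2)"
  have nx0: "norm x0 = 1/2" using assms(4) by (simp add: x0_def disc_norm)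
  define e where "e = cscale2 2 x0"
  have ne: "norm e = 1" using nx0 by (simp add: e_def norm_cscale2)
  define g where "g t = ip (ch t) e" for t
  have hol: "g holomorphic_on ball 0 1"
    using holo_disc_ip[OF assms(1)] unfolding g_def unit_disc_def by simp
  have g0: "g 0 = 0" by (simp add: g_def assms(3))
  have lt: "norm (g t) < 1" if "norm t < 1" for t
  proof -
    have "ch t \<in> B2" using assms(2) that disc_norm by blast
    hence "norm (ch t) < 1" by (simp add: B2_norm)
    thus ?thesis using ip_cs[of "ch t" e] ne unfolding g_def by simp
  qed
  have gh: "g (1/2) = 1/2"
    unfolding g_def e_def ip_cscale2_right x0_def[symmetric] ip_self nx0 by (simp add: power2_eq_square)
  obtain \<alpha> where \<alpha>: "\<forall>z. norm z < 1 \<longrightarrow> g z = \<alpha> * z" "norm \<alpha> = 1"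
  proof -
    have z0: "norm (0::complex) < 1" by simp
    have "\<exists>z. norm z < 1 \<and> z \<noteq> 0 \<and> norm (g z) = norm z"
      by (rule exI[of _ "1/2"]) (simp add: gh)
    hence "\<exists>\<alpha>. (\<forall>z. norm z < 1 \<longrightarrow> g z = \<alpha> * z) \<and> norm \<alpha> = 1"
      by (intro Schwarz_Lemma(3)[OF hol g0 lt, of 0]) auto
    thus ?thesis using that by blast
  qed
  show ?thesis
  proof (intro exI[of _ "cscale2 \<alpha> e"] conjI ballI)
    show "norm (cscale2 \<alpha> e) = 1" by (simp add: norm_cscale2 ne \<alpha>(2))
    fix \<zeta> assume z: "\<zeta> \<in> unit_disc"
    have c: "ip (ch \<zeta>) e = \<alpha> * \<zeta>" using \<alpha>(1) z g_def by (simp add: disc_norm)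
    have "(norm (ch \<zeta> - cscale2 (ip (ch \<zeta>) e) e))^2 = 0"
      unfolding pyth[OF ne] unfolding c using assms(4) z \<alpha>(2) by (simp add: norm_mult)
    hence "ch \<zeta> = cscale2 (\<alpha> * \<zeta>) e" using c by simp
    thus "ch \<zeta> = cscale2 \<zeta> (cscale2 \<alpha> e)" by (simp add: cscale2_assoc mult.commute)
  qed
qed

lemma geo_lin:
  assumes "holo_disc \<gamma>" "\<gamma> ` unit_disc \<subseteq> B2" "s \<in> unit_disc" "\<gamma> s = 0"
    "\<forall>b\<in>unit_disc. cmod (s - b) / cmod (1 - cnj s * b) \<le> norm (\<gamma> b)"
  shows "\<exists>v. norm v = 1 \<and> (\<forall>\<zeta>\<in>unit_disc. \<gamma> (mob (-s) \<zeta>) = cscale2 \<zeta> v)"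
proof -
  have s1: "cmod s < 1" "cmod (-s) < 1" using assms(3) by (auto simp: disc_norm)
  have img: "mob (-s) ` unit_disc \<subseteq> unit_disc" using mob_in_disc[OF s1(2)] by (auto simp: disc_norm)
  have hm: "mob (-s) holomorphic_on unit_disc" by (rule mob_holo[OF s1(2)])
  define ch where "ch = \<gamma> \<circ> mob (-s)"
  have hd: "holo_disc ch"
    unfolding holo_disc_def ch_def o_def
  proof
    show "(\<lambda>t. fst (\<gamma> (mob (- s) t))) holomorphic_on unit_disc"
      using holomorphic_on_compose_gen[OF hm _ img] assms(1) unfolding holo_disc_def o_def by blast
    show "(\<lambda>t. snd (\<gamma> (mob (- s) t))) holomorphic_on unit_disc"
      using holomorphic_on_compose_gen[OF hm _ img] assms(1) unfolding holo_disc_def o_def by blast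
  qed
  have ib: "ch ` unit_disc \<subseteq> B2" using img assms(2) by (auto simp: ch_def)
  have c0: "ch 0 = 0" by (simp add: ch_def mob_0 assms(4))
  have "\<forall>\<zeta>\<in>unit_disc. norm (ch \<zeta>) = cmod \<zeta>"
  proof
    fix \<zeta> assume z: "\<zeta> \<in> unit_disc"
    have b: "mob (-s) \<zeta> \<in> unit_disc" using img z by blast
    have "cmod \<zeta> = cmod (mob s (mob (-s) \<zeta>))" using mob_inv[OF s1(1)] z by (simp add: disc_norm)
    also have "\<dots> \<le> norm (ch \<zeta>)" using assms(5) b unfolding mob_rho[symmetric] ch_def by simp
    finally show "norm (ch \<zeta>) = cmod \<zeta>" using schwarz_vec[OF hd ib c0 z] by simp
  qed
  from lin_disc[OF hd ib c0 this] show ?thesis unfolding ch_def by simp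
qed

definition Rot :: "complex \<Rightarrow> complex \<Rightarrow> complex \<times> complex \<Rightarrow> complex \<times> complex" where
  "Rot \<alpha> \<beta> x = (\<alpha> * fst x + \<beta> * snd x, - cnj \<beta> * fst x + cnj \<alpha> * snd x)"

lemma norm_eq_from_sq: "(norm (x::complex\<times>complex))^2 = (norm y)^2 \<Longrightarrow> norm x = norm y"
  by (simp add: power2_eq_iff_nonneg)

lemma unit_ab: "(cmod \<alpha>)^2 + (cmod \<beta>)^2 = 1 \<Longrightarrow> \<alpha> * cnj \<alpha> + \<beta> * cnj \<beta> = 1"
  by (metis complex_norm_square of_real_1 of_real_add)

lemma Rot_norm: assumes "(cmod \<alpha>)^2 + (cmod \<beta>)^2 = 1" shows "norm (Rot \<alpha> \<beta> x) = norm x"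
proof -
  have "ip (Rot \<alpha> \<beta> x) (Rot \<alpha> \<beta> x) = (\<alpha> * cnj \<alpha> + \<beta> * cnj \<beta>) * ip x x"
    by (simp add: ip_def Rot_def algebra_simps)
  hence "complex_of_real ((norm (Rot \<alpha> \<beta> x))^2) = complex_of_real ((norm x)^2)"
    unfolding normsq_ip unit_ab[OF assms] by simp
  thus ?thesis using norm_eq_from_sq of_real_eq_iff by blast
qed

lemma Rot_inv: assumes "(cmod \<alpha>)^2 + (cmod \<beta>)^2 = 1" shows "Rot (cnj \<alpha>) (-\<beta>) (Rot \<alpha> \<beta> x) = x"
proof -
  have "Rot (cnj \<alpha>) (-\<beta>) (Rot \<alpha> \<beta> x) = ((\<alpha> * cnj \<alpha> + \<beta> * cnj \<beta>) * fst x, (\<alpha> * cnj \<alpha> + \<beta> * cnj \<beta>) * snd x)"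
    by (simp add: Rot_def algebra_simps)
  thus ?thesis unfolding unit_ab[OF assms] by simp
qed

lemma Rot_inv2: assumes "(cmod \<alpha>)^2 + (cmod \<beta>)^2 = 1" shows "Rot \<alpha> \<beta> (Rot (cnj \<alpha>) (-\<beta>) x) = x"
  using Rot_inv[of "cnj \<alpha>" "-\<beta>" x] assms by simp

lemma Rot_holo: "holo2 (Rot \<alpha> \<beta>) U"
  unfolding Rot_def by (rule holo2_lin)

lemma Rot_B2: assumes "(cmod \<alpha>)^2 + (cmod \<beta>)^2 = 1" shows "Rot \<alpha> \<beta> ` B2 \<subseteq> B2"
  using Rot_norm[OF assms] by (auto simp: B2_norm)

lemma rot_exists: "\<exists>\<alpha> \<beta>. (cmod \<alpha>)^2 + (cmod \<beta>)^2 = 1 \<and> Rot \<alpha> \<beta> a = (complex_of_real (norm a), 0)"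
proof (cases "a = 0")
  case True thus ?thesis by (intro exI[of _ 1] exI[of _ 0]) (simp add: Rot_def)
next
  case False
  define r where "r = norm a"
  have r0: "r > 0" using False by (simp add: r_def)
  have rsq: "(cmod (fst a))^2 + (cmod (snd a))^2 = r^2" by (simp add: r_def norm_sq_pair)
  have rsqc: "fst a * cnj (fst a) + snd a * cnj (snd a) = complex_of_real r ^ 2"
    by (metis complex_norm_square of_real_add of_real_power rsq)
  define al where "al = cnj (fst a) / complex_of_real r"
  define be where "be = cnj (snd a) / complex_of_real r"
  have 1: "(cmod al)^2 + (cmod be)^2 = 1"
    using rsq r0 by (simp add: al_def be_def norm_divide power_divide add_divide_distrib[symmetric])
  have "Rot al be a = ((fst a * cnj (fst a) + snd a * cnj (snd a)) / complex_of_real r, 0)"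
    by (simp add: Rot_def al_def be_def add_divide_distrib mult.commute)
  also have "\<dots> = (complex_of_real r, 0)" using r0 unfolding rsqc by (simp add: power2_eq_square)
  finally have 2: "Rot al be a = (complex_of_real (norm a), 0)" by (simp add: r_def)
  show ?thesis using 1 2 by blast
qed

definition Mb :: "real \<Rightarrow> complex \<times> complex \<Rightarrow> complex \<times> complex" where
  "Mb r x = ((fst x - complex_of_real r) / (1 - complex_of_real r * fst x),
             complex_of_real (sqrt (1 - r^2)) * snd x / (1 - complex_of_real r * fst x))"

lemma fst_lt: "x \<in> B2 \<Longrightarrow> cmod (fst x) < 1"
  by (cases x) (auto simp: B2_norm intro: le_less_trans[OF norm_fst_le])

lemma Mb_den: assumes "\<bar>r\<bar> < 1" "x \<in> B2" shows "1 - complex_of_real r * fst x \<noteq> 0"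
  using disc_rho_lt(1)[of "complex_of_real r" "fst x"] assms fst_lt[OF assms(2)] by simp

lemma Mb_norm_ident:
  assumes "\<bar>r\<bar> < 1"
  shows "(cmod (fst x - complex_of_real r))^2 + (1 - r^2) * (cmod (snd x))^2
       = (cmod (1 - complex_of_real r * fst x))^2 - (1 - r^2) * (1 - (norm x)^2)"
  using disc_identity[of "complex_of_real r" "fst x"] by (simp add: norm_sq_pair algebra_simps)

lemma Mb_B2: assumes "\<bar>r\<bar> < 1" "x \<in> B2" shows "Mb r x \<in> B2"
proof -
  have d: "1 - complex_of_real r * fst x \<noteq> 0" by (rule Mb_den[OF assms])
  have r2: "0 < 1 - r^2" using assms(1) by (simp add: abs_square_less_1)
  have x2: "0 < 1 - (norm x)^2" using assms(2) by (simp add: B2_norm abs_square_less_1)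
  have "(norm (Mb r x))^2 = ((cmod (fst x - complex_of_real r))^2 + (1 - r^2) * (cmod (snd x))^2)
        / (cmod (1 - complex_of_real r * fst x))^2"
    using r2 by (simp add: Mb_def norm_sq_pair norm_divide norm_mult power_divide power_mult_distrib add_divide_distrib)
  also have "\<dots> < 1"
    unfolding Mb_norm_ident[OF assms(1)] using d r2 x2 by (simp add: divide_less_eq_1)
  finally show ?thesis by (simp add: B2_norm power2_less_1_iff abs_square_less_1)
qed

lemma sq_sqrt_c: assumes "\<bar>r\<bar> < 1"
  shows "complex_of_real (sqrt (1 - r^2)) * complex_of_real (sqrt (1 - r^2)) = 1 - complex_of_real r * complex_of_real r"
proof -
  have "0 \<le> 1 - r^2" using assms by (simp add: abs_square_le_1 less_imp_le)
  hence "sqrt (1 - r^2) * sqrt (1 - r^2) = 1 - r * r" by (simp add: power2_eq_square)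
  thus ?thesis by (metis of_real_1 of_real_diff of_real_mult)
qed

lemma Mb_inv: assumes "\<bar>r\<bar> < 1" "x \<in> B2" shows "Mb (-r) (Mb r x) = x"
proof -
  have d: "1 - complex_of_real r * fst x \<noteq> 0" by (rule Mb_den[OF assms])
  have r2: "1 - complex_of_real r * complex_of_real r \<noteq> 0"
  proof -
    have "r * r < 1" using assms(1) by (metis abs_square_less_1 power2_eq_square)
    hence "r * r \<noteq> 1" by simp
    thus ?thesis by (metis of_real_1 of_real_eq_iff of_real_mult right_minus_eq)
  qed
  have s: "complex_of_real (sqrt (1 - r^2)) * complex_of_real (sqrt (1 - r^2)) = 1 - complex_of_real r * complex_of_real r"
    by (rule sq_sqrt_c[OF assms(1)])
  define y1 where "y1 = (fst x - complex_of_real r) / (1 - complex_of_real r * fst x)"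
  have den2: "1 + complex_of_real r * y1 = (1 - complex_of_real r * complex_of_real r) / (1 - complex_of_real r * fst x)"
    using d by (simp add: y1_def field_simps)
  have num: "y1 + complex_of_real r = fst x * (1 - complex_of_real r * complex_of_real r) / (1 - complex_of_real r * fst x)"
    using d by (simp add: y1_def field_simps)
  have e1: "(y1 + complex_of_real r) / (1 + complex_of_real r * y1) = fst x"
    unfolding den2 num using d r2 by simp
  have e2: "complex_of_real (sqrt (1 - r^2)) * (complex_of_real (sqrt (1 - r^2)) * snd x / (1 - complex_of_real r * fst x))
        / (1 + complex_of_real r * y1) = snd x"
  proof -
    have num2: "complex_of_real (sqrt (1 - r^2)) * (complex_of_real (sqrt (1 - r^2)) * snd x / (1 - complex_of_real r * fst x))
       = (1 - complex_of_real r * complex_of_real r) * snd x / (1 - complex_of_real r * fst x)"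
      using s by (simp add: mult.assoc[symmetric])
    show ?thesis unfolding den2 num2 using d r2 by simp
  qed
  show ?thesis using e1 e2 unfolding Mb_def y1_def[symmetric] by (simp add: prod_eq_iff)
qed

lemma Mb_holo: assumes "\<bar>r\<bar> < 1" shows "holo2 (Mb r) B2"
  unfolding Mb_def
  by (intro holo2_pair hol2s_divide hol2s_diff hol2s_mult hol2s_const hol2s_fst hol2s_snd ballI Mb_den[OF assms])

lemma Mb_r0: "Mb r (complex_of_real r, 0) = 0" by (simp add: Mb_def zero_prod_def)

lemma ball_auto:
  assumes "a \<in> B2"
  shows "\<exists>T S. holo2 T B2 \<and> holo2 S B2 \<and> T ` B2 \<subseteq> B2 \<and> S ` B2 \<subseteq> B2 \<and>
      (\<forall>x\<in>B2. S (T x) = x) \<and> (\<forall>x\<in>B2. T (S x) = x) \<and> T a = 0"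
proof -
  obtain \<alpha> \<beta> where ab: "(cmod \<alpha>)^2 + (cmod \<beta>)^2 = 1" "Rot \<alpha> \<beta> a = (complex_of_real (norm a), 0)"
    using rot_exists by blast
  have ab': "(cmod (cnj \<alpha>))^2 + (cmod (-\<beta>))^2 = 1" using ab(1) by simp
  define r where "r = norm a"
  have r: "\<bar>r\<bar> < 1" "\<bar>-r\<bar> < 1" using assms by (auto simp: r_def B2_norm)
  define T where "T = Mb r \<circ> Rot \<alpha> \<beta>"
  define S where "S = Rot (cnj \<alpha>) (-\<beta>) \<circ> Mb (-r)"
  have UB: "Rot \<alpha> \<beta> ` B2 \<subseteq> B2" "Rot (cnj \<alpha>) (-\<beta>) ` B2 \<subseteq> B2" using Rot_B2 ab(1) ab' by auto
  have MB: "Mb r ` B2 \<subseteq> B2" "Mb (-r) ` B2 \<subseteq> B2" using Mb_B2 r by auto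
  have h1: "holo2 T B2" unfolding T_def by (rule holo2_comp[OF Rot_holo Mb_holo[OF r(1)] UB(1)])
  have h2: "holo2 S B2" unfolding S_def by (rule holo2_comp[OF Mb_holo[OF r(2)] Rot_holo MB(2)])
  have h3: "T ` B2 \<subseteq> B2" unfolding T_def image_comp[symmetric] using UB(1) MB(1) by (meson image_mono order_trans)
  have h4: "S ` B2 \<subseteq> B2" unfolding S_def image_comp[symmetric] using UB(2) MB(2) by (meson image_mono order_trans)
  have h5: "\<forall>x\<in>B2. S (T x) = x"
  proof
    fix x assume x: "x \<in> B2"
    have "Rot \<alpha> \<beta> x \<in> B2" using UB x by auto
    thus "S (T x) = x" unfolding S_def T_def using Mb_inv[OF r(1)] Rot_inv[OF ab(1)] by simp
  qed
  have h6: "\<forall>x\<in>B2. T (S x) = x"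
  proof
    fix x assume x: "x \<in> B2"
    have "Mb (-r) x \<in> B2" using MB x by auto
    thus "T (S x) = x" unfolding S_def T_def using Mb_inv[OF r(2) x] Rot_inv2[OF ab(1)] by simp
  qed
  have h7: "T a = 0" unfolding T_def using ab(2) Mb_r0 by (simp add: r_def)
  show ?thesis using h1 h2 h3 h4 h5 h6 h7 by blast
qed

lemma MM_zero:
  assumes hol: "f holomorphic_on ball 0 1"
    and bd: "\<And>t. norm t < 1 \<Longrightarrow> (cmod (f t))^2 \<le> 1 - (cmod t)^2"
    and t0: "cmod t0 < 1"
  shows "f t0 = 0"
proof (rule ccontr)
  assume "f t0 \<noteq> 0"
  define c where "c = cmod (f t0)"
  have c0: "c > 0" using \<open>f t0 \<noteq> 0\<close> by (simp add: c_def)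
  have c1: "c^2 \<le> 1" using bd[OF t0] zero_le_power2[of "cmod t0"] unfolding c_def by linarith
  define r where "r = max ((1 + cmod t0)/2) (sqrt (1 - c^2/2))"
  have r1: "r < 1"
  proof -
    have "sqrt (1 - c^2/2) < 1" using c0 by simp
    thus ?thesis using t0 by (simp add: r_def)
  qed
  have rt: "cmod t0 < r"
  proof -
    have "cmod t0 < (1 + cmod t0)/2" using t0 by simp
    thus ?thesis unfolding r_def by linarith
  qed
  have r0: "r > 0" using rt norm_ge_zero[of t0] by linarith
  have rr: "1 - r^2 \<le> c^2/2"
  proof -
    have "sqrt (1 - c^2/2) \<le> r" by (simp add: r_def)
    moreover have "0 \<le> 1 - c^2/2" using c1 by simp
    ultimately have "1 - c^2/2 \<le> r^2"
      by (metis real_sqrt_le_iff real_sqrt_pow2 real_sqrt_ge_zero power_mono)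
    thus ?thesis by simp
  qed
  have "cmod (f t0) \<le> sqrt (1 - r^2)"
  proof (rule maximum_modulus_frontier[of f "ball 0 r"])
    show "f holomorphic_on interior (ball 0 r)"
      using holomorphic_on_subset[OF hol] r1 by (simp add: subset_ball)
    show "continuous_on (closure (ball 0 r)) f"
      using holomorphic_on_imp_continuous_on[OF hol] r0 r1
      by (simp add: continuous_on_subset[where t="cball 0 r"] cball_subset_ball_iff)
    show "bounded (ball (0::complex) r)" by simp
    show "cmod (f z) \<le> sqrt (1 - r^2)" if "z \<in> frontier (ball 0 r)" for z
    proof -
      have z: "cmod z = r" using that r0 by simp
      have "(cmod (f z))^2 \<le> 1 - r^2" using bd[of z] z r1 by simp
      thus ?thesis by (simp add: real_le_rsqrt)
    qed
    show "t0 \<in> ball 0 r" using rt by simp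
  qed
  hence "c^2 \<le> (sqrt (1 - r^2))^2" unfolding c_def by (rule power_mono) simp
  moreover have "0 \<le> 1 - r^2" using r0 r1 by (simp add: abs_square_le_1)
  ultimately have "c^2 \<le> 1 - r^2" by simp
  moreover have "c^2 > 0" using c0 by simp
  ultimately show False using rr by linarith
qed

lemma curve_lin: "((\<lambda>t. cscale2 t w) has_derivative (\<lambda>h. cscale2 h w)) (at t)"
proof -
  have "((\<lambda>t. t * fst w) has_field_derivative fst w) (at t)" by (auto intro!: derivative_eq_intros)
  moreover have "((\<lambda>t. t * snd w) has_field_derivative snd w) (at t)" by (auto intro!: derivative_eq_intros)
  ultimately show ?thesis using curve_deriv by (simp add: cscale2_def)
qed

lemma holo_disc_line: "holo_disc (\<lambda>t. cscale2 t w)"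
  unfolding holo_disc_def cscale2_def by (auto intro!: holomorphic_intros)

lemma line_B2: assumes "norm w \<le> 1" shows "(\<lambda>t. cscale2 t w) ` unit_disc \<subseteq> B2"
proof
  fix x assume "x \<in> (\<lambda>t. cscale2 t w) ` unit_disc"
  then obtain t where t: "cmod t < 1" "x = cscale2 t w" by (auto simp: disc_norm)
  have "cmod t * norm w \<le> cmod t" using assms by (simp add: mult_left_le)
  thus "x \<in> B2" using t by (simp add: B2_norm norm_cscale2)
qed

lemma cscale2_0[simp]: "cscale2 0 w = 0" by (simp add: cscale2_def zero_prod_def)
lemma cscale2_1[simp]: "cscale2 1 w = w" by (simp add: cscale2_def)

lemma slice_deriv:
  assumes "(G has_derivative D) (at 0)" "\<forall>c v. D (cscale2 c v) = cscale2 c (D v)"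
  shows "((\<lambda>t. ip (G (cscale2 t w)) e) has_field_derivative ip (D w) e) (at 0)"
proof -
  have "(G has_derivative D) (at (cscale2 0 w))" using assms(1) by simp
  from comp_deriv[OF curve_lin this assms(2)] show ?thesis by simp
qed

lemma norm_sq_add_real:
  "(norm (x + cscale2 (complex_of_real t) w))^2 = (norm x)^2 + 2 * t * Re (ip x w) + t^2 * (norm w)^2"
proof -
  have "ip (x + cscale2 (complex_of_real t) w) (x + cscale2 (complex_of_real t) w)
      = ip x x + complex_of_real t * (ip x w + cnj (ip x w)) + (complex_of_real t)^2 * ip w w"
    by (simp add: ip_def cscale2_def algebra_simps power2_eq_square)
  hence "complex_of_real ((norm (x + cscale2 (complex_of_real t) w))^2)
     = complex_of_real ((norm x)^2) + complex_of_real t * (ip x w + cnj (ip x w)) + (complex_of_real t)^2 * complex_of_real ((norm w)^2)"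
    unfolding normsq_ip .
  hence "Re (complex_of_real ((norm (x + cscale2 (complex_of_real t) w))^2)) =
     Re (complex_of_real ((norm x)^2) + complex_of_real t * (ip x w + cnj (ip x w)) + (complex_of_real t)^2 * complex_of_real ((norm w)^2))"
    by simp
  thus ?thesis by (simp add: power2_eq_square)
qed

lemma slice_setup:
  assumes G: "holo2 G B2" "G ` B2 \<subseteq> B2" "G 0 = 0" and w: "norm w \<le> 1" and e: "norm e \<le> 1"
  shows "(\<lambda>t. ip (G (cscale2 t w)) e) holomorphic_on ball 0 1"
    and "(\<lambda>t. ip (G (cscale2 t w)) e) 0 = 0"
    and "\<And>t. norm t < 1 \<Longrightarrow> norm (ip (G (cscale2 t w)) e) < 1"
    and "\<And>t. norm t < 1 \<Longrightarrow> G (cscale2 t w) \<in> B2"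
proof -
  show "(\<lambda>t. ip (G (cscale2 t w)) e) holomorphic_on ball 0 1"
    using holo_disc_ip_comp[OF holo_disc_line line_B2[OF w] G(1)] by (simp add: unit_disc_def)
  show "(\<lambda>t. ip (G (cscale2 t w)) e) 0 = 0" using G(3) by simp
  show inB: "G (cscale2 t w) \<in> B2" if "norm t < 1" for t
  proof -
    have "cscale2 t w \<in> (\<lambda>t. cscale2 t w) ` unit_disc" using that by (simp add: disc_norm)
    hence "cscale2 t w \<in> B2" using line_B2[OF w] by blast
    thus ?thesis using G(2) by blast
  qed
  show "norm (ip (G (cscale2 t w)) e) < 1" if "norm t < 1" for t
  proof -
    have "norm (G (cscale2 t w)) < 1" using inB[OF that] by (simp add: B2_norm)
    moreover have "norm (G (cscale2 t w)) * norm e \<le> norm (G (cscale2 t w))"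
      using e by (simp add: mult_left_le)
    ultimately show ?thesis using ip_cs[of "G (cscale2 t w)" e] by linarith
  qed
qed

locale cart =
  fixes G :: "complex \<times> complex \<Rightarrow> complex \<times> complex" and D
  assumes G: "holo2 G B2" "G ` B2 \<subseteq> B2" "G 0 = 0"
    and D: "(G has_derivative D) (at 0)" "\<forall>c v. D (cscale2 c v) = cscale2 c (D v)"
begin

lemma lin: "linear D" using has_derivative_bounded_linear[OF D(1)] bounded_linear.linear by blast
lemma Dadd: "D (x + y) = D x + D y" using linear_add[OF lin] .
lemma D0: "D 0 = 0" using linear_0[OF lin] .
lemma Dsc: "D (cscale2 c v) = cscale2 c (D v)" using D(2) by blast

lemma deriv_g: "((\<lambda>t. ip (G (cscale2 t w)) e) has_field_derivative ip (D w) e) (at 0)"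
  by (rule slice_deriv[OF D(1) D(2)])

lemma contr_unit: assumes "norm w = 1" shows "norm (D w) \<le> 1"
proof (cases "D w = 0")
  case True thus ?thesis by simp
next
  case False
  define m where "m = norm (D w)"
  have m0: "m > 0" using False by (simp add: m_def)
  define e where "e = cscale2 (1 / complex_of_real m) (D w)"
  have ne: "norm e = 1" using m0 by (simp add: e_def norm_cscale2 norm_divide m_def)
  note S = slice_setup[OF G, of w e, OF _ ] 
  have w1: "norm w \<le> 1" "norm e \<le> 1" using assms ne by auto
  have "norm (deriv (\<lambda>t. ip (G (cscale2 t w)) e) 0) \<le> 1"
    by (rule Schwarz_Lemma(2)[OF slice_setup(1-3)[OF G w1], of 0]) auto
  moreover have "deriv (\<lambda>t. ip (G (cscale2 t w)) e) 0 = ip (D w) e"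
    by (rule DERIV_imp_deriv[OF deriv_g])
  moreover have "ip (D w) e = complex_of_real m"
    unfolding e_def ip_cscale2_right ip_self using m0 by (simp add: m_def power2_eq_square)
  ultimately show ?thesis using m0 by (simp add: m_def)
qed

lemma contr: "norm (D w) \<le> norm w"
proof (cases "w = 0")
  case True thus ?thesis by (simp add: D0)
next
  case False
  define n where "n = norm w"
  have n0: "n > 0" using False by (simp add: n_def)
  define w1 where "w1 = cscale2 (1 / complex_of_real n) w"
  have nw1: "norm w1 = 1" using n0 by (simp add: w1_def norm_cscale2 norm_divide n_def)
  have ww: "w = cscale2 (complex_of_real n) w1" using n0 by (simp add: w1_def cscale2_assoc)
  have "norm (D w) = n * norm (D w1)" unfolding ww Dsc by (simp add: norm_cscale2 n0 less_imp_le)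
  also have "\<dots> \<le> n" using contr_unit[OF nw1] n0 by (simp add: mult_left_le)
  finally show ?thesis by (simp add: n_def)
qed

lemma re_ip:
  assumes "norm (D y) = norm y"
  shows "Re (ip (D y) (D w)) = Re (ip y w)"
proof (rule ccontr)
  define d where "d = Re (ip (D y) (D w)) - Re (ip y w)"
  define K where "K = (norm w)^2 - (norm (D w))^2"
  assume "Re (ip (D y) (D w)) \<noteq> Re (ip y w)"
  hence d0: "d \<noteq> 0" by (simp add: d_def)
  have K0: "K \<ge> 0" unfolding K_def using contr[of w] norm_ge_zero[of "D w"] by (simp add: power_mono)
  have ineq: "2 * t * d \<le> t^2 * K" for t :: real
  proof -
    have "(norm (D (y + cscale2 (complex_of_real t) w)))^2 \<le> (norm (y + cscale2 (complex_of_real t) w))^2"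
      using contr[of "y + cscale2 (complex_of_real t) w"] norm_ge_zero by (simp add: power_mono)
    thus ?thesis unfolding Dadd Dsc norm_sq_add_real assms K_def d_def by (simp add: algebra_simps)
  qed
  define t where "t = d / (K + 1)"
  have td: "t * d > 0"
  proof -
    have "d * d > 0" using d0 by (metis not_real_square_gt_zero)
    moreover have "t * d = d * d / (K + 1)" by (simp add: t_def)
    ultimately show ?thesis using K0 by simp
  qed
  have "t^2 * K = (t * d) * (K / (K + 1))" using K0 by (simp add: t_def power2_eq_square field_simps)
  also have "\<dots> < (t * d) * 1" using td K0 by (intro mult_strict_left_mono) auto
  also have "\<dots> < 2 * t * d" using td by (simp add: mult.commute)
  finally show False using ineq[of t] by simp
qed

lemma ip_pres:
  assumes "norm (D y) = norm y"
  shows "ip (D y) (D w) = ip y w"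
proof (rule complex_eqI)
  show "Re (ip (D y) (D w)) = Re (ip y w)" by (rule re_ip[OF assms])
  have "norm (D (cscale2 \<i> y)) = norm (cscale2 \<i> y)" unfolding Dsc by (simp add: norm_cscale2 assms)
  from re_ip[OF this, of w] show "Im (ip (D y) (D w)) = Im (ip y w)"
    unfolding Dsc ip_cscale2_left by simp
qed

lemma isometry:
  assumes v: "norm (D v) = norm v" and v': "norm (D v') = norm v'"
    and det: "fst v * snd v' - snd v * fst v' \<noteq> 0"
  shows "norm (D x) = norm x"
proof -
  define dt where "dt = fst v * snd v' - snd v * fst v'"
  define a where "a = (fst x * snd v' - snd x * fst v') / dt"
  define b where "b = (fst v * snd x - snd v * fst x) / dt"
  have xd: "x = cscale2 a v + cscale2 b v'"
  proof -
    have dt0: "dt \<noteq> 0" using det by (simp add: dt_def)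
    have adt: "a * dt = fst x * snd v' - snd x * fst v'" using dt0 by (simp add: a_def)
    have bdt: "b * dt = fst v * snd x - snd v * fst x" using dt0 by (simp add: b_def)
    have "fst (cscale2 a v + cscale2 b v') * dt = (a * dt) * fst v + (b * dt) * fst v'"
      by (simp add: cscale2_def algebra_simps)
    also have "\<dots> = fst x * dt" unfolding adt bdt unfolding dt_def by (simp add: algebra_simps)
    finally have F1: "fst (cscale2 a v + cscale2 b v') = fst x" using dt0 by simp
    have "snd (cscale2 a v + cscale2 b v') * dt = (a * dt) * snd v + (b * dt) * snd v'"
      by (simp add: cscale2_def algebra_simps)
    also have "\<dots> = snd x * dt" unfolding adt bdt unfolding dt_def by (simp add: algebra_simps)
    finally have "snd (cscale2 a v + cscale2 b v') = snd x" using dt0 by simp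
    thus ?thesis using F1 by (simp add: prod_eq_iff)
  qed
  have ipa: "ip (u1 + u2) z = ip u1 z + ip u2 z" for u1 u2 z by (simp add: ip_def algebra_simps)
  have e1: "ip (D (cscale2 a v + cscale2 b v')) z = a * ip (D v) z + b * ip (D v') z" for z
    by (simp add: Dadd Dsc ipa ip_cscale2_left)
  have e2: "ip (cscale2 a v + cscale2 b v') z = a * ip v z + b * ip v' z" for z
    by (simp add: ipa ip_cscale2_left)
  have "ip (D x) (D x) = a * ip (D v) (D x) + b * ip (D v') (D x)" using e1[of "D x"] xd by simp
  also have "\<dots> = a * ip v x + b * ip v' x" unfolding ip_pres[OF v] ip_pres[OF v'] ..
  also have "\<dots> = ip x x" using e2[of x] xd by simp
  finally have "ip (D x) (D x) = ip x x" .
  hence "complex_of_real ((norm (D x))^2) = complex_of_real ((norm x)^2)" unfolding normsq_ip .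
  thus ?thesis using norm_eq_from_sq of_real_eq_iff by blast
qed

lemma cartan_slice:
  assumes w: "norm w = 1" and Dw: "norm (D w) = 1" and t: "norm t < 1"
  shows "G (cscale2 t w) = cscale2 t (D w)"
proof -
  define g where "g t = ip (G (cscale2 t w)) (D w)" for t
  have w1: "norm w \<le> 1" "norm (D w) \<le> 1" using w Dw by auto
  note S = slice_setup[OF G w1]
  have dg: "(g has_field_derivative 1) (at 0)"
    using deriv_g[of w "D w"] unfolding g_def ip_self Dw by simp
  hence "deriv g 0 = 1" by (rule DERIV_imp_deriv)
  then obtain \<alpha> where \<alpha>: "\<forall>z. norm z < 1 \<longrightarrow> g z = \<alpha> * z"
    using Schwarz_Lemma(3)[OF S(1) S(2) S(3), of 0] unfolding g_def by auto
  have "((\<lambda>z. \<alpha> * z) has_field_derivative \<alpha>) (at 0)" by (auto intro!: derivative_eq_intros)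
  hence "(g has_field_derivative \<alpha>) (at 0)"
    by (rule has_field_derivative_transform_within_open[of _ _ _ "ball 0 1"]) (use \<alpha> in auto)
  hence a1: "\<alpha> = 1" using dg DERIV_unique by blast
  have gt: "ip (G (cscale2 s w)) (D w) = s" if "norm s < 1" for s
    using \<alpha> a1 that unfolding g_def by simp
  define h where "h s = G (cscale2 s w) - cscale2 s (D w)" for s
  have hb: "(norm (h s))^2 \<le> 1 - (cmod s)^2" if "norm s < 1" for s
  proof -
    have "(norm (h s))^2 = (norm (G (cscale2 s w)))^2 - (cmod s)^2"
      using pyth[OF Dw, of "G (cscale2 s w)"] gt[OF that] unfolding h_def by simp
    moreover have "norm (G (cscale2 s w)) < 1" using S(4)[OF that] by (simp add: B2_norm)
    hence "(norm (G (cscale2 s w)))^2 \<le> 1" by (simp add: abs_square_le_1)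
    ultimately show ?thesis by simp
  qed
  have hol1: "(\<lambda>s. ip (G (cscale2 s w)) (1,0) - s * fst (D w)) holomorphic_on ball 0 1"
    using slice_setup(1)[OF G w1(1), of "(1,0)"] by (auto intro!: holomorphic_intros)
  have hol2: "(\<lambda>s. ip (G (cscale2 s w)) (0,1) - s * snd (D w)) holomorphic_on ball 0 1"
    using slice_setup(1)[OF G w1(1), of "(0,1)"] by (auto intro!: holomorphic_intros)
  have f1: "ip (G (cscale2 s w)) (1,0) - s * fst (D w) = fst (h s)" for s
    by (simp add: h_def ip_def cscale2_def)
  have f2: "ip (G (cscale2 s w)) (0,1) - s * snd (D w) = snd (h s)" for s
    by (simp add: h_def ip_def cscale2_def)
  have "fst (h t) = 0"
    unfolding f1[symmetric]
  proof (rule MM_zero[OF hol1 _ t])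
    fix s :: complex assume s: "norm s < 1"
    have "(cmod (fst (h s)))^2 \<le> (norm (h s))^2" by (simp add: norm_sq_pair)
    thus "(cmod (ip (G (cscale2 s w)) (1,0) - s * fst (D w)))^2 \<le> 1 - (cmod s)^2"
      using hb[OF s] unfolding f1 by linarith
  qed
  moreover have "snd (h t) = 0"
    unfolding f2[symmetric]
  proof (rule MM_zero[OF hol2 _ t])
    fix s :: complex assume s: "norm s < 1"
    have "(cmod (snd (h s)))^2 \<le> (norm (h s))^2" by (simp add: norm_sq_pair)
    thus "(cmod (ip (G (cscale2 s w)) (0,1) - s * snd (D w)))^2 \<le> 1 - (cmod s)^2"
      using hb[OF s] unfolding f2 by linarith
  qed
  ultimately have "h t = 0" by (simp add: prod_eq_iff)
  thus ?thesis by (simp add: h_def)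
qed

lemma G_eq_D:
  assumes iso: "\<And>x. norm (D x) = norm x" and x: "x \<in> B2"
  shows "G x = D x"
proof (cases "x = 0")
  case True thus ?thesis by (simp add: G(3) D0)
next
  case False
  define n where "n = norm x"
  have n0: "n > 0" using False by (simp add: n_def)
  have n1: "n < 1" using x by (simp add: n_def B2_norm)
  define w where "w = cscale2 (1 / complex_of_real n) x"
  have nw: "norm w = 1" using n0 by (simp add: w_def norm_cscale2 norm_divide n_def)
  have xw: "x = cscale2 (complex_of_real n) w" using n0 by (simp add: w_def cscale2_assoc)
  have "G x = cscale2 (complex_of_real n) (D w)"
    unfolding xw by (rule cartan_slice[OF nw]) (use iso nw n0 n1 in auto)
  also have "\<dots> = D x" unfolding xw Dsc ..
  finally show ?thesis .
qed

lemma D_matrix: "D x = (fst (D (1,0)) * fst x + fst (D (0,1)) * snd x, snd (D (1,0)) * fst x + snd (D (0,1)) * snd x)"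
proof -
  have "x = cscale2 (fst x) (1,0) + cscale2 (snd x) (0,1)" by (simp add: cscale2_def prod_eq_iff)
  hence "D x = cscale2 (fst x) (D (1,0)) + cscale2 (snd x) (D (0,1))" by (metis Dadd Dsc)
  thus ?thesis by (simp add: cscale2_def algebra_simps)
qed

end

lemma cartan:
  assumes G: "holo2 G B2" "G ` B2 \<subseteq> B2" "G 0 = 0"
    and v: "norm v = 1" "norm u = 1" "\<forall>t\<in>unit_disc. G (cscale2 t v) = cscale2 t u"
    and v': "norm v' = 1" "norm u' = 1" "\<forall>t\<in>unit_disc. G (cscale2 t v') = cscale2 t u'"
    and det: "fst v * snd v' - snd v * fst v' \<noteq> 0"
  shows "\<exists>a b c d. (\<forall>x. norm (a * fst x + b * snd x, c * fst x + d * snd x) = norm x) \<and>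
           (\<forall>x\<in>B2. G x = (a * fst x + b * snd x, c * fst x + d * snd x))"
proof -
  obtain D where D: "(G has_derivative D) (at 0)" "\<forall>c v. D (cscale2 c v) = cscale2 c (D v)"
    using G(1) unfolding holo2_def B2_def by force
  interpret cart G D using G D by unfold_locales
  have Dv: "D y = z" if "\<forall>t\<in>unit_disc. G (cscale2 t y) = cscale2 t z" for y z
  proof -
    have "(G \<circ> (\<lambda>t. cscale2 t y) has_derivative D \<circ> (\<lambda>h. cscale2 h y)) (at 0)"
      using diff_chain_at[OF curve_lin[of y 0]] D(1) by simp
    moreover have "(G \<circ> (\<lambda>t. cscale2 t y) has_derivative (\<lambda>h. cscale2 h z)) (at 0)"
      by (rule has_derivative_transform_within_open[OF curve_lin[of z 0] open_unit_disc])
         (use that in \<open>auto simp: unit_disc_def\<close>)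
    ultimately have "D \<circ> (\<lambda>h. cscale2 h y) = (\<lambda>h. cscale2 h z)" using has_derivative_unique by blast
    from fun_cong[OF this, of 1] show ?thesis by simp
  qed
  have iso: "norm (D x) = norm x" for x
    by (rule isometry) (use Dv[OF v(3)] Dv[OF v'(3)] v v' det in auto)
  show ?thesis
    apply (rule exI[of _ "fst (D (1,0))"], rule exI[of _ "fst (D (0,1))"],
           rule exI[of _ "snd (D (1,0))"], rule exI[of _ "snd (D (0,1))"])
    using iso G_eq_D[OF iso] D_matrix by metis
qed

lemma auto_ub:
  assumes S: "holo2 S B2" "S ` B2 \<subseteq> B2" and T: "T ` B2 \<subseteq> B2" "\<forall>x\<in>B2. S (T x) = x"
    and c: "T c = 0" "c \<in> B2" and p: "p \<in> B2"
  shows "kobayashi_dist B2 c p \<le> artanh (norm (T p))"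
proof -
  define q where "q = T p"
  have qB: "q \<in> B2" using T(1) p by (auto simp: q_def)
  define r where "r = norm q"
  have r1: "r < 1" using qB by (simp add: r_def B2_norm)
  define e where "e = (if q = 0 then (1,0) else cscale2 (1 / complex_of_real r) q)"
  have ne: "norm e \<le> 1"
    by (cases "q = 0") (auto simp: e_def norm_cscale2 norm_divide r_def)
  have qe: "cscale2 (complex_of_real r) e = q"
    by (cases "q = 0") (auto simp: e_def cscale2_assoc r_def)
  define f where "f = S \<circ> (\<lambda>t. cscale2 t e)"
  have hf: "holo_disc f" unfolding f_def by (rule holo_disc_comp[OF holo_disc_line line_B2[OF ne] S(1)])
  have fB: "f ` unit_disc \<subseteq> B2" unfolding f_def using line_B2[OF ne] S(2) by auto
  have f0: "f 0 = c" unfolding f_def using T(2) c by (metis cscale2_0 comp_apply)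
  have fr: "f (complex_of_real r) = p" unfolding f_def using qe T(2) p by (simp add: q_def)
  have "kobayashi_dist B2 (f 0) (f (complex_of_real r)) \<le> hyp_dist 0 (complex_of_real r)"
    by (rule kob_le[OF hf fB]) (use r1 in \<open>auto simp: disc_norm r_def\<close>)
  moreover have "hyp_dist 0 (complex_of_real r) = artanh r"
    by (simp add: hyp_dist_def r_def)
  ultimately show ?thesis using f0 fr by (simp add: r_def q_def)
qed

lemma geo_normal:
  assumes geo: "complex_geodesic \<psi>" and s: "s \<in> unit_disc" "\<psi> s = c"
    and TS: "holo2 T B2" "holo2 S B2" "T ` B2 \<subseteq> B2" "S ` B2 \<subseteq> B2" "\<forall>x\<in>B2. S (T x) = x" "T c = 0"
  shows "\<exists>v. norm v = 1 \<and> (\<forall>\<zeta>\<in>unit_disc. T (\<psi> (mob (-s) \<zeta>)) = cscale2 \<zeta> v)"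
proof -
  have hd: "holo_disc \<psi>" and im: "\<psi> ` unit_disc \<subseteq> B2"
    and kd: "\<forall>a\<in>unit_disc. \<forall>b\<in>unit_disc. kobayashi_dist B2 (\<psi> a) (\<psi> b) = hyp_dist a b"
    using geo unfolding complex_geodesic_def by auto
  have cB: "c \<in> B2" using s im by auto
  define \<gamma> where "\<gamma> = T \<circ> \<psi>"
  have hg: "holo_disc \<gamma>" unfolding \<gamma>_def by (rule holo_disc_comp[OF hd im TS(1)])
  have ig: "\<gamma> ` unit_disc \<subseteq> B2" unfolding \<gamma>_def using im TS(3) by auto
  have g0: "\<gamma> s = 0" unfolding \<gamma>_def using s TS(6) by simp
  have lb: "\<forall>b\<in>unit_disc. cmod (s - b) / cmod (1 - cnj s * b) \<le> norm (\<gamma> b)"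
  proof
    fix b assume b: "b \<in> unit_disc"
    have pB: "\<psi> b \<in> B2" using b im by auto
    have "hyp_dist s b = kobayashi_dist B2 c (\<psi> b)" using kd s b by metis
    also have "\<dots> \<le> artanh (norm (T (\<psi> b)))" by (rule auto_ub[OF TS(2,4,3,5,6) cB pB])
    finally have le: "artanh (cmod (s - b) / cmod (1 - cnj s * b)) \<le> artanh (norm (\<gamma> b))"
      by (simp add: hyp_dist_def \<gamma>_def)
    have r1: "cmod (s - b) / cmod (1 - cnj s * b) < 1"
      using disc_rho_lt(2)[of s b] s b
      by (simp add: disc_norm norm_minus_commute divide_less_eq_1) 
    have g1: "norm (\<gamma> b) < 1" using ig b by (auto simp: B2_norm)
    show "cmod (s - b) / cmod (1 - cnj s * b) \<le> norm (\<gamma> b)"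
      by (rule artanh_le_imp[OF _ r1 _ g1 le]) auto
  qed
  from geo_lin[OF hg ig s(1) g0 lb] show ?thesis unfolding \<gamma>_def by simp
qed

lemma det_nonzero_or_parallel:
  assumes "norm v = 1" "norm v' = 1" "fst v * snd v' - snd v * fst v' = 0"
  shows "\<exists>l. cmod l = 1 \<and> v' = cscale2 l v"
proof -
  have "\<exists>l. v' = cscale2 l v"
  proof (cases "fst v = 0")
    case True
    hence s: "snd v \<noteq> 0" using assms(1) by (cases v) auto
    hence "fst v' = 0" using assms(3) True by simp
    thus ?thesis using True s by (intro exI[of _ "snd v' / snd v"]) (simp add: cscale2_def prod_eq_iff)
  next
    case False
    have "snd v' = fst v' / fst v * snd v" using assms(3) False by (simp add: field_simps)
    thus ?thesis using False by (intro exI[of _ "fst v' / fst v"]) (simp add: cscale2_def prod_eq_iff)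
  qed
  then obtain l where l: "v' = cscale2 l v" by blast
  have "cmod l = 1" using assms(1,2) l by (simp add: norm_cscale2)
  thus ?thesis using l by blast
qed

lemma iso_det:
  fixes a b c d :: complex
  assumes iso: "\<forall>x. norm (a * fst x + b * snd x, c * fst x + d * snd x) = norm x"
  shows "a * d - b * c \<noteq> 0"
proof
  assume dt: "a * d - b * c = 0"
  have "(a * fst (d,-c) + b * snd (d,-c), c * fst (d,-c) + d * snd (d,-c)) = (a * d - b * c, 0)"
    by (simp add: algebra_simps)
  hence "(a * fst (d,-c) + b * snd (d,-c), c * fst (d,-c) + d * snd (d,-c)) = 0"
    using dt by (simp add: zero_prod_def)
  hence "norm (d, -c) = 0" using iso[rule_format, of "(d, -c)"] by simp
  hence dc: "d = 0" "c = 0" by (simp_all add: prod_eq_iff zero_prod_def)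
  have "(a * fst (b,-a) + b * snd (b,-a), c * fst (b,-a) + d * snd (b,-a)) = (0, -(a * d - b * c))"
    by (simp add: algebra_simps)
  hence "(a * fst (b,-a) + b * snd (b,-a), c * fst (b,-a) + d * snd (b,-a)) = 0"
    using dt by (simp add: zero_prod_def)
  hence "norm (b, -a) = 0" using iso[rule_format, of "(b, -a)"] by simp
  hence ab: "b = 0" "a = 0" by (simp_all add: prod_eq_iff zero_prod_def)
  have "norm (a * 1 + b * 0, c * 1 + d * 0) = norm ((1::complex), (0::complex))" using iso[rule_format, of "(1, 0)"] by simp
  thus False using ab dc by (simp add: zero_prod_def)
qed

theorem lemma3p1:
  fixes F :: "complex \<times> complex \<Rightarrow> complex \<times> complex"
    and \<phi> \<eta> :: "complex \<Rightarrow> complex \<times> complex"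
    and z :: "complex \<times> complex"
  assumes "holo2 F B2" and "F ` B2 \<subseteq> B2"
    and "complex_geodesic \<phi>" and "complex_geodesic \<eta>"
    and "z \<in> B2" and "\<phi> ` unit_disc \<inter> \<eta> ` unit_disc = {z}"
    and "complex_geodesic (F \<circ> \<phi>)" and "complex_geodesic (F \<circ> \<eta>)"
  shows "automorphism_B2 F"
proof -
  note FH = assms(1) and FB = assms(2) and gphi = assms(3) and geta = assms(4) and zB = assms(5)
    and int = assms(6) and gFphi = assms(7) and gFeta = assms(8)
  have phiB: "\<phi> ` unit_disc \<subseteq> B2" using gphi by (simp add: complex_geodesic_def)
  have etaB: "\<eta> ` unit_disc \<subseteq> B2" using geta by (simp add: complex_geodesic_def)
  have zz: "z \<in> \<phi> ` unit_disc" "z \<in> \<eta> ` unit_disc" using int by blast+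
  obtain s where s: "s \<in> unit_disc" "\<phi> s = z" using zz(1) by (metis imageE)
  obtain t0 where t0: "t0 \<in> unit_disc" "\<eta> t0 = z" using zz(2) by (metis imageE)
  obtain T1 S1 where A: "holo2 T1 B2" "holo2 S1 B2" "T1 ` B2 \<subseteq> B2" "S1 ` B2 \<subseteq> B2"
      "\<forall>x\<in>B2. S1 (T1 x) = x" "\<forall>x\<in>B2. T1 (S1 x) = x" "T1 z = 0"
    using ball_auto[OF zB] by blast
  have wB: "F z \<in> B2" using FB zB by auto
  obtain T2 S2 where B: "holo2 T2 B2" "holo2 S2 B2" "T2 ` B2 \<subseteq> B2" "S2 ` B2 \<subseteq> B2"
      "\<forall>x\<in>B2. S2 (T2 x) = x" "\<forall>x\<in>B2. T2 (S2 x) = x" "T2 (F z) = 0"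
    using ball_auto[OF wB] by blast
  obtain v where v: "norm v = 1" "\<forall>\<zeta>\<in>unit_disc. T1 (\<phi> (mob (-s) \<zeta>)) = cscale2 \<zeta> v"
    using geo_normal[OF gphi s A(1-5) A(7)] by blast
  obtain u where u: "norm u = 1" "\<forall>\<zeta>\<in>unit_disc. T2 ((F \<circ> \<phi>) (mob (-s) \<zeta>)) = cscale2 \<zeta> u"
    using geo_normal[OF gFphi s(1) _ B(1-5) B(7)] s(2) by auto
  obtain v' where v': "norm v' = 1" "\<forall>\<zeta>\<in>unit_disc. T1 (\<eta> (mob (-t0) \<zeta>)) = cscale2 \<zeta> v'"
    using geo_normal[OF geta t0 A(1-5) A(7)] by blast
  obtain u' where u': "norm u' = 1" "\<forall>\<zeta>\<in>unit_disc. T2 ((F \<circ> \<eta>) (mob (-t0) \<zeta>)) = cscale2 \<zeta> u'"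
    using geo_normal[OF gFeta t0(1) _ B(1-5) B(7)] t0(2) by auto
  have s1: "cmod (-s) < 1" using s by (simp add: disc_norm)
  have t1: "cmod (-t0) < 1" using t0 by (simp add: disc_norm)
  have ms: "mob (-s) \<zeta> \<in> unit_disc" if "\<zeta> \<in> unit_disc" for \<zeta>
    using mob_in_disc[OF s1] that by (simp add: disc_norm)
  have mt: "mob (-t0) \<zeta> \<in> unit_disc" if "\<zeta> \<in> unit_disc" for \<zeta>
    using mob_in_disc[OF t1] that by (simp add: disc_norm)
  define G where "G = T2 \<circ> F \<circ> S1"
  have FS1: "(F \<circ> S1) ` B2 \<subseteq> B2" using A(4) FB by auto
  have GH: "holo2 G B2" unfolding G_def comp_assoc
    by (rule holo2_comp[OF holo2_comp[OF A(2) FH A(4)] B(1) FS1])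
  have GB: "G ` B2 \<subseteq> B2" unfolding G_def using A(4) FB B(3) by auto
  have S10: "S1 0 = z" using A(5) A(7) zB by metis
  have G0: "G 0 = 0" unfolding G_def using S10 B(7) by simp
  have Gv: "\<forall>\<zeta>\<in>unit_disc. G (cscale2 \<zeta> v) = cscale2 \<zeta> u"
  proof
    fix \<zeta> assume \<zeta>: "\<zeta> \<in> unit_disc"
    have pB: "\<phi> (mob (-s) \<zeta>) \<in> B2" using phiB ms[OF \<zeta>] by auto
    have "G (cscale2 \<zeta> v) = T2 (F (S1 (T1 (\<phi> (mob (-s) \<zeta>)))))" using v(2) \<zeta> by (simp add: G_def)
    also have "\<dots> = T2 (F (\<phi> (mob (-s) \<zeta>)))" using A(5) pB by simp
    also have "\<dots> = cscale2 \<zeta> u" using u(2) \<zeta> by simp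
    finally show "G (cscale2 \<zeta> v) = cscale2 \<zeta> u" .
  qed
  have Gv': "\<forall>\<zeta>\<in>unit_disc. G (cscale2 \<zeta> v') = cscale2 \<zeta> u'"
  proof
    fix \<zeta> assume \<zeta>: "\<zeta> \<in> unit_disc"
    have pB: "\<eta> (mob (-t0) \<zeta>) \<in> B2" using etaB mt[OF \<zeta>] by auto
    have "G (cscale2 \<zeta> v') = T2 (F (S1 (T1 (\<eta> (mob (-t0) \<zeta>)))))" using v'(2) \<zeta> by (simp add: G_def)
    also have "\<dots> = T2 (F (\<eta> (mob (-t0) \<zeta>)))" using A(5) pB by simp
    also have "\<dots> = cscale2 \<zeta> u'" using u'(2) \<zeta> by simp
    finally show "G (cscale2 \<zeta> v') = cscale2 \<zeta> u'" .
  qed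
  have det: "fst v * snd v' - snd v * fst v' \<noteq> 0"
  proof
    assume "fst v * snd v' - snd v * fst v' = 0"
    then obtain l where l: "cmod l = 1" "v' = cscale2 l v" using det_nonzero_or_parallel v(1) v'(1) by blast
    have h: "(1/2 :: complex) \<in> unit_disc" "cnj l / 2 \<in> unit_disc" using l(1) by (auto simp: disc_norm norm_divide)
    define p1 where "p1 = \<phi> (mob (-s) (1/2))"
    define p2 where "p2 = \<eta> (mob (-t0) (cnj l / 2))"
    have p1B: "p1 \<in> B2" using phiB ms[OF h(1)] by (auto simp: p1_def)
    have p2B: "p2 \<in> B2" using etaB mt[OF h(2)] by (auto simp: p2_def)
    have lc: "cnj l * l = 1" using l(1) by (metis complex_norm_square mult.commute of_real_1 power_one)
    have T1p1: "T1 p1 = cscale2 (1/2) v" using v(2) h(1) by (simp add: p1_def)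
    have "T1 p2 = cscale2 (cnj l / 2) v'" using v'(2) h(2) by (simp add: p2_def)
    also have "\<dots> = cscale2 (1/2) v" unfolding l(2) cscale2_assoc using lc by (simp add: field_simps)
    finally have "T1 p1 = T1 p2" using T1p1 by simp
    hence p12: "p1 = p2" using A(5) p1B p2B by metis
    have "p1 \<in> \<phi> ` unit_disc" unfolding p1_def using ms[OF h(1)] by blast
    moreover have "p2 \<in> \<eta> ` unit_disc" unfolding p2_def using mt[OF h(2)] by blast
    ultimately have "p1 \<in> \<phi> ` unit_disc \<inter> \<eta> ` unit_disc" using p12 by blast
    hence "p1 = z" using int by auto
    hence "cscale2 (1/2) v = 0" using T1p1 A(7) by simp
    hence "v = 0" by (simp add: cscale2_def prod_eq_iff zero_prod_def)
    thus False using v(1) by simp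
  qed
  obtain a b c d where M: "\<forall>x. norm (a * fst x + b * snd x, c * fst x + d * snd x) = norm x"
      "\<forall>x\<in>B2. G x = (a * fst x + b * snd x, c * fst x + d * snd x)"
    using cartan[OF GH GB G0 v(1) u(1) Gv v'(1) u'(1) Gv' det] by blast
  define M where "M x = (a * fst x + b * snd x, c * fst x + d * snd x)" for x
  define dt where "dt = a * d - b * c"
  have dt0: "dt \<noteq> 0" using iso_det[OF M(1)] by (simp add: dt_def)
  define idt where "idt = 1 / dt"
  have di: "dt * idt = 1" using dt0 by (simp add: idt_def)
  define Mi where "Mi y = ((d * idt) * fst y + (- b * idt) * snd y, (- c * idt) * fst y + (a * idt) * snd y)" for y
  have MMi: "M (Mi y) = y" for y
  proof -
    have "fst (M (Mi y)) = (dt * idt) * fst y" "snd (M (Mi y)) = (dt * idt) * snd y"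
      by (simp_all add: M_def Mi_def dt_def algebra_simps)
    thus ?thesis using di by (simp add: prod_eq_iff)
  qed
  have MiM: "Mi (M x) = x" for x
  proof -
    have "fst (Mi (M x)) = (dt * idt) * fst x" "snd (Mi (M x)) = (dt * idt) * snd x"
      by (simp_all add: M_def Mi_def dt_def algebra_simps)
    thus ?thesis using di by (simp add: prod_eq_iff)
  qed
  have Mn: "norm (M x) = norm x" for x using M(1) by (simp add: M_def)
  have Min: "norm (Mi y) = norm y" for y using Mn[of "Mi y"] MMi by simp
  have MB: "M x \<in> B2" if "x \<in> B2" for x using that Mn by (simp add: B2_norm)
  have MiB: "Mi y \<in> B2" if "y \<in> B2" for y using that Min by (simp add: B2_norm)
  have Fx: "F x = S2 (M (T1 x))" if x: "x \<in> B2" for x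
  proof -
    have T1x: "T1 x \<in> B2" using A(3) x by auto
    have "M (T1 x) = G (T1 x)" using M(2) T1x by (simp add: M_def)
    also have "\<dots> = T2 (F x)" using A(5) x by (simp add: G_def)
    finally have "S2 (M (T1 x)) = S2 (T2 (F x))" by simp
    also have "\<dots> = F x" using B(5) FB x by auto
    finally show ?thesis by simp
  qed
  define K where "K = S1 \<circ> (Mi \<circ> T2)"
  have KB: "K y \<in> B2" if "y \<in> B2" for y
  proof -
    have "T2 y \<in> B2" using that B(3) by blast
    hence "Mi (T2 y) \<in> B2" by (rule MiB)
    thus ?thesis using A(4) unfolding K_def by auto
  qed
  have KF: "K (F x) = x" if x: "x \<in> B2" for x
  proof -
    have "K (F x) = S1 (Mi (T2 (S2 (M (T1 x)))))" using Fx[OF x] by (simp add: K_def)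
    also have "\<dots> = S1 (T1 x)"
    proof -
      have "T1 x \<in> B2" using A(3) x by blast
      hence "M (T1 x) \<in> B2" by (rule MB)
      hence "T2 (S2 (M (T1 x))) = M (T1 x)" using B(6) by blast
      thus ?thesis using MiM by simp
    qed
    also have "\<dots> = x" using A(5) x by simp
    finally show ?thesis .
  qed
  have FK: "F (K y) = y" if y: "y \<in> B2" for y
  proof -
    have MiT: "Mi (T2 y) \<in> B2" by (intro MiB) (use B(3) y in blast)
    have "F (K y) = S2 (M (T1 (S1 (Mi (T2 y)))))" using Fx[OF KB[OF y]] by (simp add: K_def)
    also have "\<dots> = S2 (T2 y)" using A(6) MiT MMi by simp
    also have "\<dots> = y" using B(5) y by simp
    finally show ?thesis .
  qed
  have bij: "bij_betw F B2 B2"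
    by (rule bij_betw_byWitness[where f'=K]) (use KF FK FB KB in auto)
  have KH: "holo2 K B2"
  proof -
    have Mih: "holo2 Mi B2" unfolding Mi_def by (rule holo2_lin)
    have i1: "T2 ` B2 \<subseteq> B2" by (rule B(3))
    have i2: "(Mi \<circ> T2) ` B2 \<subseteq> B2"
    proof
      fix x assume "x \<in> (Mi \<circ> T2) ` B2"
      then obtain y where y: "y \<in> B2" "x = Mi (T2 y)" by auto
      show "x \<in> B2" unfolding y(2) by (intro MiB) (use B(3) y in blast)
    qed
    show ?thesis unfolding K_def by (rule holo2_comp[OF holo2_comp[OF B(1) Mih i1] A(2) i2])
  qed
  have invH: "holo2 (inv_into B2 F) B2"
  proof (rule holo2_cong[OF KH open_B2])
    fix y assume y: "y \<in> B2"
    show "inv_into B2 F y = K y"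
      by (rule inv_into_f_eq[OF bij_betw_imp_inj_on[OF bij] KB[OF y] FK[OF y]])
  qed
  show ?thesis unfolding automorphism_B2_def using FH bij invH by blast
qed


end
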